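(* Let $X$ be a d-space such that the preorder $\le$ on $X$ induced by $\vec\pi_1(X)$ (namely $x\le y$ iff there is a morphism $x\to y$ in $\vec\pi_1(X)$) is antisymmetric and makes $X$ a compact pospace. Let $X=X_0\supseteq X_1\supseteq\dots\supseteq X_n=A$ with functors $P_i:\vec\pi_1(X,X_{i-1})\to\vec\pi_1(X,X_i)$ be an extremal model of $X$ in which each $X_i$ ($1\le i\le n$) is compact. Then $\mathrm{Ext}(\vec\pi_1(X,A))=\mathrm{Ext}(X)$; that is, the extremal model induces an isomorphism (equality) of the fundamental bipartite graphs $\vec\pi_1(X,\mathrm{Ext}(X))$ and $\vec\pi_1(X,\mathrm{Ext}(\vec\pi_1(X,A)))$.
   Context: A d-space is a topological space $X$ with a set $dX$ of continuous paths $[0,1]\to X$ (dipaths) containing all constant paths, closed under precomposition with continuous non-decreasing maps $[0,1]\to[0,1]$, and closed under concatenation; subsets carry the dipaths with image in the subset. $\vec I$ is $[0,1]$ with all continuous non-decreasing paths as dipaths. The fundamental category $\vec\pi_1(X)$ has as objects the points of $X$ and as morphisms $a\to b$ the classes of dipaths from $a$ to $b$ under the equivalence relation generated by endpoint-fixing directed homotopies (dimaps $H:\vec I\times\vec I\to X$ with $H(t,0)=\gamma(t)$, $H(t,1)=\gamma'(t)$, $H(0,s)=a$, $H(1,s)=b$); composition is concatenation. For $A\subseteq X$, $\vec\pi_1(X,A)$ is the full subcategory on objects in $A$. A pospace is a topological space with a partial order $\le$ that is a closed subset of $X\times X$. For a category $\mathcal C$, $x\le y$ iff there is a morphism $x\to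 y$; minimal, maximal, extremal objects are defined with respect to this preorder ($a$ minimal iff $x\le a\Rightarrow x=a$; maximal iff $a\le x\Rightarrow x=a$); $\mathrm{Ext}(\mathcal C)$ is the set of extremal objects and $\mathrm{Ext}(X)=\mathrm{Ext}(\vec\pi_1(X))$. For $A\subseteq B\subseteq X$ with inclusion $\iota:\vec\pi_1(X,A)\to\vec\pi_1(X,B)$, a future retract is a functor $P:\vec\pi_1(X,B)\to\vec\pi_1(X,A)$ left adjoint to $\iota$ with unit $\eta_a=\mathrm{id}_a$ for $a\in A$; a past retract is a right adjoint $P$ of $\iota$ with counit $\varepsilon_a=\mathrm{id}_a$ for $a\in A$. An extremal model of $X$ is a chain $X=X_0\supseteq\dots\supseteq X_n=A$ with functors $P_i:\vec\pi_1(X,X_{i-1})\to\vec\pi_1(X,X_i)$, each a future or past retract, with $\mathrm{Ext}(X)\subseteq A$. *)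

theory Defs
  imports "HOL-Analysis.Analysis"
begin

(* Paths are represented as functions real => 'a, only their values on [0,1]
   matter (membership in D is required to depend only on these values). *)

definition Ivec_dipath :: "(real \<Rightarrow> real) \<Rightarrow> bool" where
  "Ivec_dipath \<phi> \<longleftrightarrow> continuous_on {0..1} \<phi> \<and> \<phi> ` {0..1} \<subseteq> {0..1} \<and> mono_on {0..1} \<phi>"

definition dconcat :: "(real \<Rightarrow> 'a) \<Rightarrow> (real \<Rightarrow> 'a) \<Rightarrow> real \<Rightarrow> 'a" where
  "dconcat g1 g2 = (\<lambda>t. if t \<le> 1/2 then g1 (2 * t) else g2 (2 * t - 1))"

definition dspace :: "'a topology \<Rightarrow> (real \<Rightarrow> 'a) set \<Rightarrow> bool" where
  "dspace X D \<longleftrightarrow>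
     (\<forall>\<gamma>\<in>D. continuous_map (top_of_set {0..1}) X \<gamma>) \<and>
     (\<forall>x\<in>topspace X. (\<lambda>t. x) \<in> D) \<and>
     (\<forall>\<gamma>\<in>D. \<forall>\<phi>. Ivec_dipath \<phi> \<longrightarrow> \<gamma> \<circ> \<phi> \<in> D) \<and>
     (\<forall>\<gamma>\<in>D. \<forall>\<delta>\<in>D. \<gamma> 1 = \<delta> 0 \<longrightarrow> dconcat \<gamma> \<delta> \<in> D) \<and>
     (\<forall>\<gamma> \<delta>. (\<forall>t\<in>{0..1}. \<gamma> t = \<delta> t) \<longrightarrow> (\<gamma> \<in> D \<longleftrightarrow> \<delta> \<in> D))"

(* dimap from Ivec x Ivec into (X, D): continuous, and maps dipaths of the
   product d-space (pairs of Ivec dipaths) to dipaths *)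
definition dimap2 :: "'a topology \<Rightarrow> (real \<Rightarrow> 'a) set \<Rightarrow> (real \<times> real \<Rightarrow> 'a) \<Rightarrow> bool" where
  "dimap2 X D H \<longleftrightarrow> continuous_map (top_of_set ({0..1} \<times> {0..1})) X H \<and>
     (\<forall>\<delta>1 \<delta>2. Ivec_dipath \<delta>1 \<and> Ivec_dipath \<delta>2 \<longrightarrow> (\<lambda>t. H (\<delta>1 t, \<delta>2 t)) \<in> D)"

definition dihtpy :: "'a topology \<Rightarrow> (real \<Rightarrow> 'a) set \<Rightarrow> (real \<Rightarrow> 'a) \<Rightarrow> (real \<Rightarrow> 'a) \<Rightarrow> bool" where
  "dihtpy X D \<gamma> \<gamma>' \<longleftrightarrow> \<gamma> \<in> D \<and> \<gamma>' \<in> D \<and>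
     (\<exists>H. dimap2 X D H \<and>
        (\<forall>t\<in>{0..1}. H (t, 0) = \<gamma> t \<and> H (t, 1) = \<gamma>' t) \<and>
        (\<forall>s\<in>{0..1}. H (0, s) = \<gamma> 0 \<and> H (1, s) = \<gamma> 1))"

definition dclass :: "'a topology \<Rightarrow> (real \<Rightarrow> 'a) set \<Rightarrow> (real \<Rightarrow> 'a) \<Rightarrow> (real \<Rightarrow> 'a) set" where
  "dclass X D \<gamma> = {\<delta>. equivclp (dihtpy X D) \<gamma> \<delta>}"

definition dmor :: "'a topology \<Rightarrow> (real \<Rightarrow> 'a) set \<Rightarrow> 'a \<Rightarrow> 'a \<Rightarrow> (real \<Rightarrow> 'a) set set" where
  "dmor X D a b = dclass X D ` {\<gamma>\<in>D. \<gamma> 0 = a \<and> \<gamma> 1 = b}"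

definition did :: "'a topology \<Rightarrow> (real \<Rightarrow> 'a) set \<Rightarrow> 'a \<Rightarrow> (real \<Rightarrow> 'a) set" where
  "did X D a = dclass X D (\<lambda>t. a)"

(* composition in diagrammatic order: dseq f g = "first f, then g" (concatenation) *)
definition dseq :: "'a topology \<Rightarrow> (real \<Rightarrow> 'a) set \<Rightarrow> (real \<Rightarrow> 'a) set \<Rightarrow> (real \<Rightarrow> 'a) set \<Rightarrow> (real \<Rightarrow> 'a) set" where
  "dseq X D f g = {\<theta>. \<exists>\<gamma>\<in>f. \<exists>\<delta>\<in>g. equivclp (dihtpy X D) (dconcat \<gamma> \<delta>) \<theta>}"

definition dle :: "'a topology \<Rightarrow> (real \<Rightarrow> 'a) set \<Rightarrow> 'a \<Rightarrow> 'a \<Rightarrow> bool" where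
  "dle X D x y \<longleftrightarrow> dmor X D x y \<noteq> {}"

definition Ext :: "'a topology \<Rightarrow> (real \<Rightarrow> 'a) set \<Rightarrow> 'a set \<Rightarrow> 'a set" where
  "Ext X D S = {a\<in>S. (\<forall>x\<in>S. dle X D x a \<longrightarrow> x = a) \<or> (\<forall>x\<in>S. dle X D a x \<longrightarrow> x = a)}"

definition dfunctor :: "'a topology \<Rightarrow> (real \<Rightarrow> 'a) set \<Rightarrow> 'a set \<Rightarrow> 'a set \<Rightarrow>
     ('a \<Rightarrow> 'a) \<Rightarrow> ((real \<Rightarrow> 'a) set \<Rightarrow> (real \<Rightarrow> 'a) set) \<Rightarrow> bool" where
  "dfunctor X D B A Pob Pm \<longleftrightarrow>
     (\<forall>b\<in>B. Pob b \<in> A) \<and>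
     (\<forall>b\<in>B. \<forall>b'\<in>B. \<forall>f\<in>dmor X D b b'. Pm f \<in> dmor X D (Pob b) (Pob b')) \<and>
     (\<forall>b\<in>B. Pm (did X D b) = did X D (Pob b)) \<and>
     (\<forall>b\<in>B. \<forall>b'\<in>B. \<forall>b''\<in>B. \<forall>f\<in>dmor X D b b'. \<forall>g\<in>dmor X D b' b''.
        Pm (dseq X D f g) = dseq X D (Pm f) (Pm g))"

(* future retract: P left adjoint to the inclusion, with unit \<eta>, \<eta>_a = id_a on A
   (adjunction given by a natural transformation \<eta> : Id \<Rightarrow> \<iota>P that is universal) *)
definition future_retract :: "'a topology \<Rightarrow> (real \<Rightarrow> 'a) set \<Rightarrow> 'a set \<Rightarrow> 'a set \<Rightarrow>
     ('a \<Rightarrow> 'a) \<Rightarrow> ((real \<Rightarrow> 'a) set \<Rightarrow> (real \<Rightarrow> 'a) set) \<Rightarrow> bool" where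
  "future_retract X D B A Pob Pm \<longleftrightarrow> dfunctor X D B A Pob Pm \<and>
     (\<exists>\<eta>. (\<forall>b\<in>B. \<eta> b \<in> dmor X D b (Pob b)) \<and>
          (\<forall>b\<in>B. \<forall>b'\<in>B. \<forall>f\<in>dmor X D b b'. dseq X D f (\<eta> b') = dseq X D (\<eta> b) (Pm f)) \<and>
          (\<forall>b\<in>B. \<forall>a\<in>A. \<forall>f\<in>dmor X D b a. \<exists>!g. g \<in> dmor X D (Pob b) a \<and> dseq X D (\<eta> b) g = f) \<and>
          (\<forall>a\<in>A. \<eta> a = did X D a))"

(* past retract: P right adjoint to the inclusion, with counit \<epsilon>, \<epsilon>_a = id_a on A *)
definition past_retract :: "'a topology \<Rightarrow> (real \<Rightarrow> 'a) set \<Rightarrow> 'a set \<Rightarrow> 'a set \<Rightarrow>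
     ('a \<Rightarrow> 'a) \<Rightarrow> ((real \<Rightarrow> 'a) set \<Rightarrow> (real \<Rightarrow> 'a) set) \<Rightarrow> bool" where
  "past_retract X D B A Pob Pm \<longleftrightarrow> dfunctor X D B A Pob Pm \<and>
     (\<exists>\<epsilon>. (\<forall>b\<in>B. \<epsilon> b \<in> dmor X D (Pob b) b) \<and>
          (\<forall>b\<in>B. \<forall>b'\<in>B. \<forall>f\<in>dmor X D b b'. dseq X D (Pm f) (\<epsilon> b') = dseq X D (\<epsilon> b) f) \<and>
          (\<forall>b\<in>B. \<forall>a\<in>A. \<forall>f\<in>dmor X D a b. \<exists>!g. g \<in> dmor X D a (Pob b) \<and> dseq X D g (\<epsilon> b) = f) \<and>
          (\<forall>a\<in>A. \<epsilon> a = did X D a))"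

definition extremal_model :: "'a topology \<Rightarrow> (real \<Rightarrow> 'a) set \<Rightarrow> (nat \<Rightarrow> 'a set) \<Rightarrow> nat \<Rightarrow> bool" where
  "extremal_model X D Xs n \<longleftrightarrow>
     Xs 0 = topspace X \<and>
     (\<forall>i\<in>{1..n}. Xs i \<subseteq> Xs (i - 1)) \<and>
     (\<forall>i\<in>{1..n}. \<exists>Pob Pm. future_retract X D (Xs (i - 1)) (Xs i) Pob Pm \<or>
                           past_retract X D (Xs (i - 1)) (Xs i) Pob Pm) \<and>
     Ext X D (topspace X) \<subseteq> Xs n"

end

theory Submission
  imports Defs
begin

lemma finite_chain_min:
  assumes "finite S" "S \<noteq> {}" "\<forall>a\<in>S. \<forall>b\<in>S. R a b \<or> R b a"
    and "\<forall>a b c. a\<in>S \<longrightarrow> b\<in>S \<longrightarrow> c\<in>S \<longrightarrow> R a b \<longrightarrow> R b c \<longrightarrow> R a c"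
    and "\<forall>a\<in>S. R a a"
  shows "\<exists>m\<in>S. \<forall>s\<in>S. R m s"
  using assms
proof (induction S rule: finite_ne_induct)
  case (singleton x)
  then show ?case by blast
next
  case (insert x F)
  note ch = insert.prems(1) and tr = insert.prems(2) and rf = insert.prems(3)
  have "\<forall>a\<in>F. \<forall>b\<in>F. R a b \<or> R b a" using ch by blast
  moreover have "\<forall>a b c. a\<in>F \<longrightarrow> b\<in>F \<longrightarrow> c\<in>F \<longrightarrow> R a b \<longrightarrow> R b c \<longrightarrow> R a c"
    using tr by blast
  moreover have "\<forall>a\<in>F. R a a" using rf by blast
  ultimately obtain m where m: "m\<in>F" "\<forall>s\<in>F. R m s" using insert.IH by blast
  show ?case
  proof (cases "R x m")
    case True
    have "\<forall>s\<in>F. R x s"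
    proof
      fix s assume s: "s \<in> F"
      have "R m s" using m s by blast
      have "x \<in> insert x F" "m \<in> insert x F" "s \<in> insert x F" using m(1) s by auto
      then show "R x s" using tr True \<open>R m s\<close> by blast
    qed
    then have "\<forall>s\<in>insert x F. R x s" using rf by simp
    then show ?thesis by blast
  next
    case False
    then have "R m x" using ch m(1) by blast
    then have "\<forall>s\<in>insert x F. R m s" using m by simp
    then show ?thesis using m(1) by blast
  qed
qed

lemma min_below:
  assumes cs: "compact_space X"
    and refl: "\<forall>x\<in>topspace X. R x x"
    and tr: "\<forall>x y z. x\<in>topspace X \<longrightarrow> y\<in>topspace X \<longrightarrow> z\<in>topspace X \<longrightarrow> R x y \<longrightarrow> R y z \<longrightarrow> R x z"
    and anti: "\<forall>x\<in>topspace X. \<forall>y\<in>topspace X. R x y \<and> R y x \<longrightarrow> x = y"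
    and cl: "\<forall>c\<in>topspace X. closedin X {y\<in>topspace X. R y c}"
    and x: "x \<in> topspace X"
  shows "\<exists>m\<in>topspace X. R m x \<and> (\<forall>y\<in>topspace X. R y m \<longrightarrow> y = m)"
proof -
  have trR: "\<And>a b c. a\<in>topspace X \<Longrightarrow> b\<in>topspace X \<Longrightarrow> c\<in>topspace X \<Longrightarrow> R a b \<Longrightarrow> R b c \<Longrightarrow> R a c"
    using tr by blast
  define A where "A = {y\<in>topspace X. R y x}"
  define P where "P = (\<lambda>a b. R b a)"
  have po: "partial_order_on A (relation_of P A)"
    unfolding partial_order_on_def preorder_on_def relation_of_def refl_on_def trans_def antisym_def
      A_def P_def using refl trR anti by blast
  have ch: "\<exists>u \<in> A. \<forall>a \<in> C. P a u" if C: "C \<in> Chains (relation_of P A)" for C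
  proof -
    have CA: "C \<subseteq> A" using C unfolding Chains_def relation_of_def by blast
    define S0 where "S0 = insert x C"
    have S0T: "S0 \<subseteq> topspace X" using CA x unfolding S0_def A_def by auto
    have S0c: "\<forall>a\<in>S0. \<forall>b\<in>S0. R a b \<or> R b a"
      using C CA refl x unfolding S0_def Chains_def relation_of_def A_def P_def by blast
    define L where "L = (\<lambda>c. {y\<in>topspace X. R y c})"
    define U where "U = L ` S0"
    have c1: "\<forall>C\<in>U. closedin X C" using cl S0T unfolding U_def L_def by auto
    have c2: "\<forall>\<F>. finite \<F> \<and> \<F> \<subseteq> U \<longrightarrow> \<Inter> \<F> \<noteq> {}"
      proof (intro allI impI)
        fix F assume F: "finite F \<and> F \<subseteq> U"
        then obtain S where S: "S \<subseteq> S0" "finite S" "F = L ` S"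
          unfolding U_def by (meson finite_subset_image)
        show "\<Inter>F \<noteq> {}"
        proof (cases "S = {}")
          case True then show ?thesis using S by simp
        next
          case False
          have "\<exists>m\<in>S. \<forall>s\<in>S. R m s"
          proof (rule finite_chain_min[OF S(2) False])
            show "\<forall>a\<in>S. \<forall>b\<in>S. R a b \<or> R b a" using S(1) S0c by blast
            show "\<forall>a\<in>S. R a a" using S(1) S0T refl by blast
            show "\<forall>a b c. a \<in> S \<longrightarrow> b \<in> S \<longrightarrow> c \<in> S \<longrightarrow> R a b \<longrightarrow> R b c \<longrightarrow> R a c"
              using S(1) S0T trR by blast
          qed
          then obtain m where "m\<in>S" "\<forall>s\<in>S. R m s" by blast
          then have "m \<in> \<Inter>F" using S S0T refl unfolding L_def by auto
          then show ?thesis by blast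
        qed
      qed
    have "\<Inter>U \<noteq> {}"
      using compact_space_fip[THEN iffD1, OF cs, rule_format, of U] c1 c2 by blast
    then obtain u where u: "u \<in> \<Inter>U" by blast
    have "u \<in> L x" using u unfolding U_def S0_def by auto
    then have "u \<in> A" unfolding L_def A_def by simp
    moreover have "\<forall>a\<in>C. P a u" using u unfolding U_def S0_def L_def P_def by auto
    ultimately show ?thesis by blast
  qed
  obtain m where m: "m \<in> A" "\<forall>a \<in> A. P m a \<longrightarrow> a = m"
    using predicate_Zorn[OF po ch] by blast
  show ?thesis
  proof (intro bexI conjI ballI impI)
    show "m \<in> topspace X" "R m x" using m unfolding A_def by auto
    fix y assume "y \<in> topspace X" "R y m"
    then have "y \<in> A" using m trR[of y m x] x unfolding A_def by blast
    then show "y = m" using m \<open>R y m\<close> unfolding P_def by blast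
  qed
qed

lemma dle_T:
  assumes "dspace X D" "dle X D x y"
  shows "x \<in> topspace X" "y \<in> topspace X"
proof -
  obtain \<gamma> where g: "\<gamma> \<in> D" "\<gamma> 0 = x" "\<gamma> 1 = y"
    using assms(2) unfolding dle_def dmor_def by blast
  have "continuous_map (top_of_set {0..1}) X \<gamma>" using assms(1) g(1) unfolding dspace_def by blast
  then have "\<gamma> ` {0..1} \<subseteq> topspace X" using continuous_map_image_subset_topspace by fastforce
  then show "x \<in> topspace X" "y \<in> topspace X" using g by auto
qed

lemma dle_refl:
  assumes "dspace X D" "x \<in> topspace X"
  shows "dle X D x x"
proof -
  have "(\<lambda>t. x) \<in> D" using assms unfolding dspace_def by blast
  then show ?thesis unfolding dle_def dmor_def by blast
qed

lemma dle_trans: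
  assumes "dspace X D" "dle X D x y" "dle X D y z"
  shows "dle X D x z"
proof -
  obtain \<gamma> where g: "\<gamma> \<in> D" "\<gamma> 0 = x" "\<gamma> 1 = y"
    using assms(2) unfolding dle_def dmor_def by blast
  obtain \<delta> where d: "\<delta> \<in> D" "\<delta> 0 = y" "\<delta> 1 = z"
    using assms(3) unfolding dle_def dmor_def by blast
  have "dconcat \<gamma> \<delta> \<in> D" using assms(1) g d unfolding dspace_def by metis
  moreover have "dconcat \<gamma> \<delta> 0 = x" "dconcat \<gamma> \<delta> 1 = z" using g d unfolding dconcat_def by auto
  ultimately show ?thesis unfolding dle_def dmor_def by blast
qed

lemma chain_sub:
  assumes "extremal_model X D Xs n"
  shows "i \<le> n \<Longrightarrow> Xs i \<subseteq> topspace X"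
proof (induction i)
  case 0 then show ?case using assms unfolding extremal_model_def by simp
next
  case (Suc i)
  then have "Xs (Suc i) \<subseteq> Xs i" using assms unfolding extremal_model_def
    by (metis Suc_eq_plus1 atLeastAtMost_iff diff_Suc_1 le_add2)
  then show ?case using Suc by simp
qed

theorem theorem3p2:
  fixes X :: "'a topology" and D :: "(real \<Rightarrow> 'a) set"
    and Xs :: "nat \<Rightarrow> 'a set" and n :: nat
  assumes "dspace X D"
    and "\<forall>x\<in>topspace X. \<forall>y\<in>topspace X. dle X D x y \<and> dle X D y x \<longrightarrow> x = y"
    and "compact_space X"
    and "closedin (prod_topology X X) {(x, y). x \<in> topspace X \<and> y \<in> topspace X \<and> dle X D x y}"
    and "extremal_model X D Xs n"
    and "\<forall>i\<in>{1..n}. compactin X (Xs i)"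
  shows "Ext X D (Xs n) = Ext X D (topspace X)"
proof -
  let ?T = "topspace X"
  let ?G = "{(x, y). x \<in> topspace X \<and> y \<in> topspace X \<and> dle X D x y}"
  have AT: "Xs n \<subseteq> ?T" using chain_sub[OF assms(5)] by simp
  have ExtA: "Ext X D ?T \<subseteq> Xs n" using assms(5) unfolding extremal_model_def by blast
  have refl: "\<forall>x\<in>?T. dle X D x x" using dle_refl[OF assms(1)] by blast
  have tr: "\<forall>x y z. dle X D x y \<longrightarrow> dle X D y z \<longrightarrow> dle X D x z" using dle_trans[OF assms(1)] by blast
  have cl1: "\<forall>c\<in>?T. closedin X {y\<in>?T. dle X D y c}"
  proof
    fix c assume c: "c \<in> ?T"
    have cm: "continuous_map X (prod_topology X X) (\<lambda>y. (y, c))"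
      using c by (simp add: continuous_map_pairedI)
    have "closedin X {y\<in>?T. (\<lambda>y. (y, c)) y \<in> ?G}"
      by (rule closedin_continuous_map_preimage[OF cm assms(4)])
    moreover have "{y\<in>?T. (\<lambda>y. (y, c)) y \<in> ?G} = {y\<in>?T. dle X D y c}" using c by auto
    ultimately show "closedin X {y\<in>?T. dle X D y c}" by simp
  qed
  have cl2: "\<forall>c\<in>?T. closedin X {y\<in>?T. dle X D c y}"
  proof
    fix c assume c: "c \<in> ?T"
    have cm: "continuous_map X (prod_topology X X) (\<lambda>y. (c, y))"
      using c by (simp add: continuous_map_pairedI)
    have "closedin X {y\<in>?T. (\<lambda>y. (c, y)) y \<in> ?G}"
      by (rule closedin_continuous_map_preimage[OF cm assms(4)])
    moreover have "{y\<in>?T. (\<lambda>y. (c, y)) y \<in> ?G} = {y\<in>?T. dle X D c y}" using c by auto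
    ultimately show "closedin X {y\<in>?T. dle X D c y}" by simp
  qed
  have minb: "\<exists>m\<in>?T. dle X D m x \<and> (\<forall>y\<in>?T. dle X D y m \<longrightarrow> y = m)" if "x \<in> ?T" for x
    by (rule min_below[OF assms(3) refl _ assms(2) cl1 that]) (use tr in blast)
  have maxb: "\<exists>m\<in>?T. dle X D x m \<and> (\<forall>y\<in>?T. dle X D m y \<longrightarrow> y = m)" if "x \<in> ?T" for x
    by (rule min_below[where R="\<lambda>a b. dle X D b a", OF assms(3) refl _ _ cl2 that])
       (use tr assms(2) in blast)+
  show ?thesis
  proof
    show "Ext X D ?T \<subseteq> Ext X D (Xs n)" using ExtA AT unfolding Ext_def by blast
  next
    show "Ext X D (Xs n) \<subseteq> Ext X D ?T"
    proof
      fix a assume a: "a \<in> Ext X D (Xs n)"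
      then have aA: "a \<in> Xs n" and aT: "a \<in> ?T" using AT unfolding Ext_def by auto
      from a have "(\<forall>x\<in>Xs n. dle X D x a \<longrightarrow> x = a) \<or> (\<forall>x\<in>Xs n. dle X D a x \<longrightarrow> x = a)"
        unfolding Ext_def by blast
      then show "a \<in> Ext X D ?T"
      proof
        assume mn: "\<forall>x\<in>Xs n. dle X D x a \<longrightarrow> x = a"
        have "\<forall>x\<in>?T. dle X D x a \<longrightarrow> x = a"
        proof (intro ballI impI)
          fix x assume x: "x \<in> ?T" "dle X D x a"
          obtain m where m: "m \<in> ?T" "dle X D m x" "\<forall>y\<in>?T. dle X D y m \<longrightarrow> y = m"
            using minb[OF x(1)] by blast
          have "m \<in> Ext X D ?T" using m unfolding Ext_def by blast
          then have "m \<in> Xs n" using ExtA by blast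
          moreover have "dle X D m a" using tr m x by blast
          ultimately have "m = a" using mn by blast
          then show "x = a" using assms(2) x aT m by blast
        qed
        then show ?thesis using aT unfolding Ext_def by blast
      next
        assume mx: "\<forall>x\<in>Xs n. dle X D a x \<longrightarrow> x = a"
        have "\<forall>x\<in>?T. dle X D a x \<longrightarrow> x = a"
        proof (intro ballI impI)
          fix x assume x: "x \<in> ?T" "dle X D a x"
          obtain m where m: "m \<in> ?T" "dle X D x m" "\<forall>y\<in>?T. dle X D m y \<longrightarrow> y = m"
            using maxb[OF x(1)] by blast
          have "m \<in> Ext X D ?T" using m unfolding Ext_def by blast
          then have "m \<in> Xs n" using ExtA by blast
          moreover have "dle X D a m" using tr m x by blast
          ultimately have "m = a" using mx by blast
          then show "x = a" using assms(2) x aT m by blast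
        qed
        then show ?thesis using aT unfolding Ext_def by blast
      qed
    qed
  qed
qed

end
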